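(* Let $X$ be a locally convex Hausdorff space, $K\subset X$ a convex compact subset, $T:\mathscr{C}(K)\to\mathscr{C}(K)$ a Markov operator such that $T(h)=h$ for every $h\in A(K)$, $a\ge0$, and $(\mu_n)_{n\ge1}$ Borel probability measures on $K$. Suppose that ($c_1$) $T$ maps continuous convex functions into convex functions, and ($c_2$) $\Delta(f;x,y)\ge0$ for every convex $f\in\mathscr{C}(K)$ and every $x,y\in K$. Then each $C_n$ maps continuous convex functions into (continuous) convex functions.
   Context: $A(K)$ is the space of continuous affine functions on $K$. A Markov operator is a positive linear operator $T$ on $\mathscr{C}(K)$ with $T(\mathbf{1})=\mathbf{1}$; $(\tilde\mu_x^T)_{x\in K}$ are the Borel probability measures with $\int_Kf\,d\tilde\mu_x^T=T(f)(x)$. $C_n(f)(x)=\int_K\cdots\int_K f\big(\frac{x_1+\dots+x_n+a x_{n+1}}{n+a}\big)\,d\tilde\mu_x^T(x_1)\cdots d\tilde\mu_x^T(x_n)\,d\mu_n(x_{n+1})$. For $f\in\mathscr{C}(K)$ and $x,y\in K$, $$\Delta(f;x,y)=\iint_{K^2}f\big(\tfrac{s+t}{2}\big)d\tilde\mu_x^T(s)d\tilde\mu_x^T(t)+\iint_{K^2}f\big(\tfrac{s+t}{2}\big)d\tilde\mu_y^T(s)d\tilde\mu_y^T(t)-2\iint_{K^2}f\big(\tfrac{s+t}{2}\big)d\tilde\mu_x^T(s)d\tilde\mu_y^T(t).$$ *)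

theory Defs
  imports "HOL-Analysis.Analysis" "HOL-Probability.Probability"
begin

definition lc_hausdorff_tvs :: "'a::{real_vector,t2_space} itself \<Rightarrow> bool" where
  "lc_hausdorff_tvs _ \<longleftrightarrow>
     continuous_on UNIV (\<lambda>p::'a \<times> 'a. fst p + snd p) \<and>
     continuous_on UNIV (\<lambda>p::real \<times> 'a. fst p *\<^sub>R snd p) \<and>
     (\<forall>U (x::'a). open U \<and> x \<in> U \<longrightarrow> (\<exists>V. open V \<and> convex V \<and> x \<in> V \<and> V \<subseteq> U))"

definition borel_prob_on :: "'a::topological_space set \<Rightarrow> 'a measure \<Rightarrow> bool" where
  "borel_prob_on K M \<longleftrightarrow> prob_space M \<and> space M = K \<and> sets M = sets (restrict_space borel K)"

definition affine_fun_on :: "'a::real_vector set \<Rightarrow> ('a \<Rightarrow> real) \<Rightarrow> bool" where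
  "affine_fun_on K h \<longleftrightarrow> (\<forall>x\<in>K. \<forall>y\<in>K. \<forall>t::real. 0 \<le> t \<and> t \<le> 1 \<longrightarrow>
      h ((1 - t) *\<^sub>R x + t *\<^sub>R y) = (1 - t) * h x + t * h y)"

definition A_K :: "'a::{real_vector,topological_space} set \<Rightarrow> ('a \<Rightarrow> real) set" where
  "A_K K = {h. continuous_on K h \<and> affine_fun_on K h}"

definition markov_op :: "'a::topological_space set \<Rightarrow> (('a \<Rightarrow> real) \<Rightarrow> ('a \<Rightarrow> real)) \<Rightarrow> bool" where
  "markov_op K T \<longleftrightarrow>
     (\<forall>f. continuous_on K f \<longrightarrow> continuous_on K (T f)) \<and>
     (\<forall>f g (c::real) (d::real). continuous_on K f \<and> continuous_on K g \<longrightarrow>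
        (\<forall>x\<in>K. T (\<lambda>y. c * f y + d * g y) x = c * T f x + d * T g x)) \<and>
     (\<forall>f. continuous_on K f \<and> (\<forall>x\<in>K. 0 \<le> f x) \<longrightarrow> (\<forall>x\<in>K. 0 \<le> T f x)) \<and>
     (\<forall>x\<in>K. T (\<lambda>_. 1) x = 1)"

text \<open>iter_int k M g = \<integral>...\<integral> g(x_1+...+x_k) dM(x_1)...dM(x_k)
  (x_1 innermost).\<close>
fun iter_int :: "nat \<Rightarrow> 'a::real_vector measure \<Rightarrow> ('a \<Rightarrow> real) \<Rightarrow> real" where
  "iter_int 0 M g = g 0"
| "iter_int (Suc k) M g = (\<integral>s. iter_int k M (\<lambda>z. g (z + s)) \<partial>M)"

text \<open>The operator C_n, with mu x = \<mu>_x^T and mus n = \<mu>_n.\<close>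
definition C_op :: "('a \<Rightarrow> 'a::real_vector measure) \<Rightarrow> (nat \<Rightarrow> 'a measure) \<Rightarrow> real \<Rightarrow> nat
                    \<Rightarrow> ('a \<Rightarrow> real) \<Rightarrow> 'a \<Rightarrow> real" where
  "C_op mu mus a n f x =
     (\<integral>y. iter_int n (mu x) (\<lambda>S. f ((1 / (real n + a)) *\<^sub>R (S + a *\<^sub>R y))) \<partial>(mus n))"

definition mid_int :: "'a::real_vector measure \<Rightarrow> 'a measure \<Rightarrow> ('a \<Rightarrow> real) \<Rightarrow> real" where
  "mid_int M N f = (\<integral>t. (\<integral>s. f ((1/2) *\<^sub>R (s + t)) \<partial>M) \<partial>N)"

definition Delta :: "('a \<Rightarrow> 'a::real_vector measure) \<Rightarrow> ('a \<Rightarrow> real) \<Rightarrow> 'a \<Rightarrow> 'a \<Rightarrow> real" where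
  "Delta mu f x y = mid_int (mu x) (mu x) f + mid_int (mu y) (mu y) f - 2 * mid_int (mu x) (mu y) f"

end

theory Submission
  imports Defs
begin

lemma Hausdorff_space_euclidean_t2: "Hausdorff_space (euclidean :: 'a::t2_space topology)"
  unfolding Hausdorff_space_def using hausdorff by (fastforce simp: disjnt_def)

lemma sep_points:
  fixes K :: "'a::t2_space set"
  assumes "compact K" "s \<in> K" "s' \<in> K" "s \<noteq> s'"
  obtains h :: "'a \<Rightarrow> real" where "continuous_on K h" "h s \<noteq> h s'"
proof -
  have "normal_space (top_of_set K)"
    by (rule compact_Hausdorff_or_regular_imp_normal_space)
       (simp_all add: compact_space_subtopology assms Hausdorff_space_subtopology[OF Hausdorff_space_euclidean_t2])
  then obtain f where f: "continuous_map (top_of_set K) (top_of_set {0..1::real}) f" "f ` {s} \<subseteq> {0}" "f ` {s'} \<subseteq> {1}"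
    by (rule Urysohn_lemma[of _ "{s}" "{s'}" 0 1]) (use assms in \<open>auto simp: closedin_singleton disjnt_def\<close>)
  then show ?thesis using that[of f] by (auto simp: continuous_map_subtopology_eu)
qed

lemma bp_integrable:
  fixes h :: "'a::topological_space \<Rightarrow> real"
  assumes "compact K" "borel_prob_on K M" "continuous_on K h"
  shows "integrable M h"
proof -
  interpret prob_space M using assms by (auto simp: borel_prob_on_def)
  have fm: "finite_measure M" by unfold_locales
  have meas: "h \<in> borel_measurable M"
    using borel_measurable_continuous_on_restrict[OF assms(3)] assms(2)
    by (auto simp: borel_prob_on_def cong: measurable_cong_sets)
  obtain B where B: "\<forall>x\<in>K. norm (h x) \<le> B"
    using compact_imp_bounded[OF compact_continuous_image[OF assms(3,1)]]
    by (auto simp: bounded_iff)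
  show ?thesis
    by (rule finite_measure.integrable_const_bound[where B=B]) (use B meas assms(2) in \<open>auto simp: borel_prob_on_def fm\<close>)
qed

lemma bp_int_bound:
  fixes h :: "'a::topological_space \<Rightarrow> real"
  assumes "borel_prob_on K M" "integrable M h" "\<And>s. s \<in> K \<Longrightarrow> \<bar>h s\<bar> \<le> e"
  shows "\<bar>\<integral>s. h s \<partial>M\<bar> \<le> e"
proof -
  interpret prob_space M using assms by (auto simp: borel_prob_on_def)
  have "\<bar>\<integral>s. h s \<partial>M\<bar> \<le> (\<integral>s. \<bar>h s\<bar> \<partial>M)" by (rule Bochner_Integration.integral_abs_bound)
  also have "\<dots> \<le> (\<integral>s. e \<partial>M)"
    by (rule integral_mono) (use assms in \<open>auto simp: borel_prob_on_def\<close>)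
  also have "\<dots> = e" by (simp add: prob_space)
  finally show ?thesis .
qed

lemma param_int_cont:
  fixes \<phi> :: "'b::topological_space \<times> 'a::t2_space \<Rightarrow> real"
  assumes K: "compact K" and phi: "continuous_on (Q \<times> K) \<phi>"
    and nu: "\<And>q. q \<in> Q \<Longrightarrow> borel_prob_on K (\<nu> q)"
    and nuc: "\<And>h::'a \<Rightarrow> real. continuous_on K h \<Longrightarrow> continuous_on Q (\<lambda>q. \<integral>s. h s \<partial>\<nu> q)"
  shows "continuous_on Q (\<lambda>q. \<integral>s. \<phi> (q,s) \<partial>\<nu> q)"
  unfolding continuous_on_def
proof (intro ballI)
  fix q0 assume q0: "q0 \<in> Q"
  have phiq: "continuous_on K (\<lambda>s. \<phi> (q,s))" if "q \<in> Q" for q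
    by (rule continuous_on_compose2[OF phi]) (auto intro!: continuous_intros simp: that)
  show "((\<lambda>q. \<integral>s. \<phi> (q,s) \<partial>\<nu> q) \<longlongrightarrow> (\<integral>s. \<phi> (q0,s) \<partial>\<nu> q0)) (at q0 within Q)"
    unfolding tendsto_iff
  proof (intro allI impI)
    fix e :: real assume e: "e > 0"
    obtain X0 where X0: "q0 \<in> X0" "open X0"
      "\<forall>x\<in>X0 \<inter> Q. \<forall>t\<in>K. dist (\<phi> (x, t)) (\<phi> (q0, t)) \<le> e/3"
      using continuous_on_prod_compactE[OF phi K q0, of "e/3"] e by auto
    have ev1: "\<forall>\<^sub>F q in at q0 within Q. q \<in> X0 \<and> q \<in> Q"
      unfolding eventually_at_topological using X0 by blast
    have "((\<lambda>q. \<integral>s. \<phi> (q0,s) \<partial>\<nu> q) \<longlongrightarrow> (\<integral>s. \<phi> (q0,s) \<partial>\<nu> q0)) (at q0 within Q)"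
      using nuc[OF phiq[OF q0]] q0 unfolding continuous_on_def by blast
    then have ev2: "\<forall>\<^sub>F q in at q0 within Q. dist (\<integral>s. \<phi> (q0,s) \<partial>\<nu> q) (\<integral>s. \<phi> (q0,s) \<partial>\<nu> q0) < e/3"
      using e unfolding tendsto_iff by (meson divide_pos_pos zero_less_numeral)
    show "\<forall>\<^sub>F q in at q0 within Q. dist (\<integral>s. \<phi> (q,s) \<partial>\<nu> q) (\<integral>s. \<phi> (q0,s) \<partial>\<nu> q0) < e"
      using ev1 ev2
    proof eventually_elim
      case (elim q)
      then have q: "q \<in> X0" "q \<in> Q" by auto
      have i1: "integrable (\<nu> q) (\<lambda>s. \<phi> (q,s))"
        by (rule bp_integrable[OF K nu[OF q(2)] phiq[OF q(2)]])
      have i2: "integrable (\<nu> q) (\<lambda>s. \<phi> (q0,s))"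
        by (rule bp_integrable[OF K nu[OF q(2)] phiq[OF q0]])
      have "\<bar>\<integral>s. \<phi> (q,s) - \<phi> (q0,s) \<partial>\<nu> q\<bar> \<le> e/3"
        by (rule bp_int_bound[OF nu[OF q(2)]]) (use i1 i2 X0 q in \<open>auto simp: dist_real_def\<close>)
      moreover have "(\<integral>s. \<phi> (q,s) - \<phi> (q0,s) \<partial>\<nu> q) = (\<integral>s. \<phi> (q,s) \<partial>\<nu> q) - (\<integral>s. \<phi> (q0,s) \<partial>\<nu> q)"
        using i1 i2 by simp
      ultimately show ?case using elim e unfolding dist_real_def by linarith
    qed
  qed
qed

lemma lc_add:
  fixes f g :: "'c::topological_space \<Rightarrow> 'a::{real_vector,t2_space}"
  assumes lc: "lc_hausdorff_tvs TYPE('a)" and "continuous_on S f" "continuous_on S g"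
  shows "continuous_on S (\<lambda>x. f x + g x)"
proof -
  have c: "continuous_on UNIV (\<lambda>p::'a \<times> 'a. fst p + snd p)"
    using lc by (simp add: lc_hausdorff_tvs_def)
  show ?thesis
    using continuous_on_compose2[OF c continuous_on_Pair[OF assms(2,3)]] by simp
qed

lemma lc_scale:
  fixes f :: "'c::topological_space \<Rightarrow> real" and g :: "'c \<Rightarrow> 'a::{real_vector,t2_space}"
  assumes lc: "lc_hausdorff_tvs TYPE('a)" and "continuous_on S f" "continuous_on S g"
  shows "continuous_on S (\<lambda>x. f x *\<^sub>R g x)"
proof -
  have c: "continuous_on UNIV (\<lambda>p::real \<times> 'a. fst p *\<^sub>R snd p)"
    using lc by (simp add: lc_hausdorff_tvs_def)
  show ?thesis
    using continuous_on_compose2[OF c continuous_on_Pair[OF assms(2,3)]] by simp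
qed

fun Lset :: "nat \<Rightarrow> 'a::real_vector set \<Rightarrow> 'a set" where
  "Lset 0 K = {0}"
| "Lset (Suc k) K = {z + s |z s. z \<in> Lset k K \<and> s \<in> K}"

fun mint :: "'a::real_vector measure list \<Rightarrow> ('a \<Rightarrow> real) \<Rightarrow> real" where
  "mint [] g = g 0"
| "mint (M # Ms) g = (\<integral>s. mint Ms (\<lambda>z. g (z + s)) \<partial>M)"

lemma iter_int_mint: "iter_int k M g = mint (replicate k M) g"
  by (induction k arbitrary: g) auto

lemma cont_mint:
  fixes \<nu>s :: "('b::topological_space \<Rightarrow> 'a::{real_vector,t2_space} measure) list"
    and g :: "'b \<Rightarrow> 'a \<Rightarrow> real"
  assumes lc: "lc_hausdorff_tvs TYPE('a)" and K: "compact K"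
    and nus: "\<And>\<nu> q. \<nu> \<in> set \<nu>s \<Longrightarrow> q \<in> Q \<Longrightarrow> borel_prob_on K (\<nu> q)"
    and nuc: "\<And>\<nu> (h::'a \<Rightarrow> real). \<nu> \<in> set \<nu>s \<Longrightarrow> continuous_on K h \<Longrightarrow> continuous_on Q (\<lambda>q. \<integral>s. h s \<partial>\<nu> q)"
    and g: "continuous_on (Q \<times> {z + w |z w. z \<in> Lset (length \<nu>s) K \<and> w \<in> W}) (\<lambda>p. g (fst p) (snd p))"
  shows "continuous_on (Q \<times> W) (\<lambda>p. mint (map (\<lambda>\<nu>. \<nu> (fst p)) \<nu>s) (\<lambda>z. g (fst p) (z + snd p)))"
  using nus nuc g
proof (induction \<nu>s arbitrary: W)
  case Nil
  then show ?case
    by (auto elim!: continuous_on_subset)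
next
  case (Cons \<nu> \<nu>s)
  define W' where "W' = {s + w |s w. s \<in> K \<and> w \<in> W}"
  define \<Phi> where "\<Phi> = (\<lambda>p. mint (map (\<lambda>\<nu>. \<nu> (fst p)) \<nu>s) (\<lambda>z. g (fst p) (z + snd p)))"
  have sub: "Q \<times> {z + w |z w. z \<in> Lset (length \<nu>s) K \<and> w \<in> W'}
      \<subseteq> Q \<times> {z + w |z w. z \<in> Lset (length (\<nu> # \<nu>s)) K \<and> w \<in> W}"
    unfolding W'_def by auto (metis add.assoc)
  have Phic: "continuous_on (Q \<times> W') \<Phi>"
    unfolding \<Phi>_def
    by (rule Cons.IH) (use Cons.prems continuous_on_subset[OF _ sub] in auto)
  have eq: "mint (map (\<lambda>\<nu>. \<nu> (fst p)) (\<nu> # \<nu>s)) (\<lambda>z. g (fst p) (z + snd p))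
        = (\<integral>s. \<Phi> (fst p, s + snd p) \<partial>\<nu> (fst p))" for p
    by (simp add: \<Phi>_def add.assoc)
  have phic: "continuous_on ((Q \<times> W) \<times> K) (\<lambda>x. \<Phi> (fst (fst x), snd x + snd (fst x)))"
  proof (rule continuous_on_compose2[OF Phic])
    show "continuous_on ((Q \<times> W) \<times> K) (\<lambda>x. (fst (fst x), snd x + snd (fst x)))"
      by (intro continuous_intros lc_add[OF lc])
    show "(\<lambda>x. (fst (fst x), snd x + snd (fst x))) ` ((Q \<times> W) \<times> K) \<subseteq> Q \<times> W'"
      unfolding W'_def by fastforce
  qed
  have "continuous_on (Q \<times> W) (\<lambda>p. \<integral>s. (\<lambda>x. \<Phi> (fst (fst x), snd x + snd (fst x))) (p, s) \<partial>\<nu> (fst p))"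
  proof (rule param_int_cont[OF K phic])
    show "\<And>q. q \<in> Q \<times> W \<Longrightarrow> borel_prob_on K (\<nu> (fst q))"
      using Cons.prems by auto
    fix h :: "'a \<Rightarrow> real" assume "continuous_on K h"
    then have "continuous_on Q (\<lambda>q. \<integral>s. h s \<partial>\<nu> q)" using Cons.prems by auto
    then show "continuous_on (Q \<times> W) (\<lambda>q. \<integral>s. h s \<partial>\<nu> (fst q))"
      by (rule continuous_on_compose2[of Q _ _ fst]) (auto intro: continuous_intros)
  qed
  then show ?case by (simp only: eq fst_conv snd_conv)
qed

lemma cont_mint_fixed:
  fixes Ms :: "'a::{real_vector,t2_space} measure list"
  assumes lc: "lc_hausdorff_tvs TYPE('a)" and K: "compact K"
    and Ms: "\<And>M. M \<in> set Ms \<Longrightarrow> borel_prob_on K M"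
    and g: "continuous_on {z + w |z w. z \<in> Lset (length Ms) K \<and> w \<in> W} g"
  shows "continuous_on W (\<lambda>w. mint Ms (\<lambda>z. g (z + w)))"
proof -
  have "continuous_on (UNIV \<times> W) (\<lambda>p. mint (map (\<lambda>\<nu>. \<nu> (fst p)) (map (\<lambda>M (_::real). M) Ms)) (\<lambda>z. (\<lambda>_. g) (fst p) (z + snd p)))"
    by (rule cont_mint[OF lc K]) (use Ms in \<open>auto intro!: continuous_on_compose2[OF g] continuous_intros, blast\<close>)
  then have c2: "continuous_on (UNIV \<times> W) (\<lambda>p::real \<times> 'a. mint Ms (\<lambda>z. g (z + snd p)))"
    by (simp add: comp_def)
  have "continuous_on W (Pair 0)" by (intro continuous_intros)
  from continuous_on_compose2[OF c2 this] show ?thesis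
    by auto
qed

lemma const_meas_cont: "continuous_on Q (\<lambda>q. \<integral>s. h s \<partial>M)"
  by (rule continuous_on_const)

lemma inner_cont:
  fixes \<phi> :: "'a::t2_space \<times> 'a \<Rightarrow> real"
  assumes K: "compact K" and A: "borel_prob_on K A" and B: "borel_prob_on K B"
    and phi: "continuous_on (K \<times> K) \<phi>"
  shows "continuous_on K (\<lambda>s. \<integral>t. \<phi> (s,t) \<partial>B)"
  using param_int_cont[OF K phi, of "\<lambda>_. B"] B by auto

lemma iter_bound:
  fixes \<phi> :: "'a::t2_space \<times> 'a \<Rightarrow> real"
  assumes K: "compact K" and A: "borel_prob_on K A" and B: "borel_prob_on K B"
    and phi: "continuous_on (K \<times> K) \<phi>" and bd: "\<And>p. p \<in> K \<times> K \<Longrightarrow> \<bar>\<phi> p\<bar> \<le> e"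
  shows "\<bar>\<integral>s. (\<integral>t. \<phi> (s,t) \<partial>B) \<partial>A\<bar> \<le> e"
proof (rule bp_int_bound[OF A])
  show "integrable A (\<lambda>s. \<integral>t. \<phi> (s,t) \<partial>B)"
    by (rule bp_integrable[OF K A inner_cont[OF K A B phi]])
  fix s assume s: "s \<in> K"
  have pc: "continuous_on K (\<lambda>t. \<phi> (s,t))"
    by (rule continuous_on_compose2[OF phi]) (auto intro!: continuous_intros simp: s)
  show "\<bar>\<integral>t. \<phi> (s,t) \<partial>B\<bar> \<le> e"
    by (rule bp_int_bound[OF B bp_integrable[OF K B pc]]) (use bd s in auto)
qed

lemma iter_diff:
  fixes \<phi> \<psi> :: "'a::t2_space \<times> 'a \<Rightarrow> real"
  assumes K: "compact K" and A: "borel_prob_on K A" and B: "borel_prob_on K B"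
    and phi: "continuous_on (K \<times> K) \<phi>" and psi: "continuous_on (K \<times> K) \<psi>"
  shows "(\<integral>s. (\<integral>t. \<phi> (s,t) \<partial>B) \<partial>A) - (\<integral>s. (\<integral>t. \<psi> (s,t) \<partial>B) \<partial>A)
       = (\<integral>s. (\<integral>t. \<phi> (s,t) - \<psi> (s,t) \<partial>B) \<partial>A)"
proof -
  have "(\<integral>s. (\<integral>t. \<phi> (s,t) - \<psi> (s,t) \<partial>B) \<partial>A) = (\<integral>s. (\<integral>t. \<phi> (s,t) \<partial>B) - (\<integral>t. \<psi> (s,t) \<partial>B) \<partial>A)"
  proof (rule Bochner_Integration.integral_cong[OF refl])
    fix s assume "s \<in> space A"
    then have s: "s \<in> K" using A by (auto simp: borel_prob_on_def)
    have pc: "continuous_on K (\<lambda>t. \<phi> (s,t))" "continuous_on K (\<lambda>t. \<psi> (s,t))"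
      by (rule continuous_on_compose2[OF phi] continuous_on_compose2[OF psi], auto intro!: continuous_intros simp: s)+
    show "(\<integral>t. \<phi> (s,t) - \<psi> (s,t) \<partial>B) = (\<integral>t. \<phi> (s,t) \<partial>B) - (\<integral>t. \<psi> (s,t) \<partial>B)"
      by (rule Bochner_Integration.integral_diff[OF bp_integrable[OF K B pc(1)] bp_integrable[OF K B pc(2)]])
  qed
  also have "\<dots> = (\<integral>s. (\<integral>t. \<phi> (s,t) \<partial>B) \<partial>A) - (\<integral>s. (\<integral>t. \<psi> (s,t) \<partial>B) \<partial>A)"
    by (rule Bochner_Integration.integral_diff[OF bp_integrable[OF K A inner_cont[OF K A B phi]]
          bp_integrable[OF K A inner_cont[OF K A B psi]]])
  finally show ?thesis by simp
qed

definition SL :: "(('a \<Rightarrow> real) \<times> ('a \<Rightarrow> real)) list \<Rightarrow> 'a \<times> 'a \<Rightarrow> real" where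
  "SL L p = sum_list (map (\<lambda>hk. fst hk (fst p) * snd hk (snd p)) L)"

lemma SL_simps [simp]: "SL [] p = 0" "SL (hk # L) p = fst hk (fst p) * snd hk (snd p) + SL L p"
  by (simp_all add: SL_def)

lemma SL_append: "SL (L @ L') p = SL L p + SL L' p"
  by (simp add: SL_def)

definition SLmult :: "(('a \<Rightarrow> real) \<times> ('a \<Rightarrow> real)) list \<Rightarrow> (('a \<Rightarrow> real) \<times> ('a \<Rightarrow> real)) list
     \<Rightarrow> (('a \<Rightarrow> real) \<times> ('a \<Rightarrow> real)) list" where
  "SLmult L L' = concat (map (\<lambda>hk. map (\<lambda>hk'. (\<lambda>x. fst hk x * fst hk' x, \<lambda>y. snd hk y * snd hk' y)) L') L)"

lemma SL_map_mult: "SL (map (\<lambda>hk'. (\<lambda>x. h x * fst hk' x, \<lambda>y. k y * snd hk' y)) L') p = h (fst p) * k (snd p) * SL L' p"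
  by (induction L') (auto simp: algebra_simps)

lemma SL_concat: "SL (concat Ls) p = sum_list (map (\<lambda>L. SL L p) Ls)"
  by (induction Ls) (auto simp: SL_append)

lemma SL_mult: "SL (SLmult L L') p = SL L p * SL L' p"
proof (induction L)
  case Nil then show ?case by (simp add: SLmult_def)
next
  case (Cons hk L)
  have "SL (SLmult (hk # L) L') p = SL (map (\<lambda>hk'. (\<lambda>x. fst hk x * fst hk' x, \<lambda>y. snd hk y * snd hk' y)) L') p + SL (SLmult L L') p"
    by (simp add: SLmult_def SL_append)
  also have "\<dots> = fst hk (fst p) * snd hk (snd p) * SL L' p + SL L p * SL L' p"
    by (simp only: SL_map_mult Cons.IH)
  finally show ?case by (simp add: distrib_right)
qed

lemma SL_cont:
  assumes "\<And>hk. hk \<in> set L \<Longrightarrow> continuous_on K (fst hk) \<and> continuous_on K (snd hk)"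
  shows "continuous_on (K \<times> K) (SL L)"
  using assms
proof (induction L)
  case Nil then show ?case by (simp add: SL_def[abs_def] continuous_on_const)
next
  case (Cons hk L)
  have "continuous_on (K \<times> K) (\<lambda>p. fst hk (fst p) * snd hk (snd p) + SL L p)"
  proof (intro continuous_intros)
    have h: "continuous_on K (fst hk)" "continuous_on K (snd hk)" using Cons.prems by auto
    show "continuous_on (K \<times> K) (\<lambda>p. fst hk (fst p))"
      by (rule continuous_on_compose2[OF h(1), of _ fst]) (auto intro: continuous_intros)
    show "continuous_on (K \<times> K) (\<lambda>p. snd hk (snd p))"
      by (rule continuous_on_compose2[OF h(2), of _ snd]) (auto intro: continuous_intros)
    show "continuous_on (K \<times> K) (SL L)" using Cons by auto
  qed
  then show ?case by simp
qed

lemma int_sum_list: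
  fixes F :: "'b \<Rightarrow> 'a \<Rightarrow> real"
  assumes "\<And>x. x \<in> set L \<Longrightarrow> integrable M (F x)"
  shows "integrable M (\<lambda>s. sum_list (map (\<lambda>x. F x s) L)) \<and>
         (\<integral>s. sum_list (map (\<lambda>x. F x s) L) \<partial>M) = sum_list (map (\<lambda>x. \<integral>s. F x s \<partial>M) L)"
  using assms by (induction L) auto


lemma SL_iter:
  fixes L :: "(('a::t2_space \<Rightarrow> real) \<times> ('a \<Rightarrow> real)) list"
  assumes K: "compact K" and A: "borel_prob_on K A" and B: "borel_prob_on K B"
    and L: "\<And>hk. hk \<in> set L \<Longrightarrow> continuous_on K (fst hk) \<and> continuous_on K (snd hk)"
  shows "(\<integral>s. (\<integral>t. SL L (s,t) \<partial>B) \<partial>A) = sum_list (map (\<lambda>hk. (\<integral>s. fst hk s \<partial>A) * (\<integral>t. snd hk t \<partial>B)) L)"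
proof -
  have inner: "(\<integral>t. SL L (s,t) \<partial>B) = sum_list (map (\<lambda>hk. fst hk s * (\<integral>t. snd hk t \<partial>B)) L)" for s
  proof -
    have "(\<integral>t. SL L (s,t) \<partial>B) = (\<integral>t. sum_list (map (\<lambda>hk. fst hk s * snd hk t) L) \<partial>B)"
      by (simp add: SL_def)
    also have "\<dots> = sum_list (map (\<lambda>hk. \<integral>t. fst hk s * snd hk t \<partial>B) L)"
      using int_sum_list[of L B "\<lambda>hk t. fst hk s * snd hk t"] L bp_integrable[OF K B] by auto
    finally show ?thesis by simp
  qed
  have "(\<integral>s. (\<integral>t. SL L (s,t) \<partial>B) \<partial>A) = (\<integral>s. sum_list (map (\<lambda>hk. fst hk s * (\<integral>t. snd hk t \<partial>B)) L) \<partial>A)"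
    by (simp add: inner)
  also have "\<dots> = sum_list (map (\<lambda>hk. \<integral>s. fst hk s * (\<integral>t. snd hk t \<partial>B) \<partial>A) L)"
    using int_sum_list[of L A "\<lambda>hk s. fst hk s * (\<integral>t. snd hk t \<partial>B)"] L bp_integrable[OF K A] by auto
  finally show ?thesis by simp
qed

lemma swap_int:
  fixes \<phi> :: "'a::t2_space \<times> 'a \<Rightarrow> real"
  assumes K: "compact K" and A: "borel_prob_on K A" and B: "borel_prob_on K B"
    and phi: "continuous_on (K \<times> K) \<phi>"
  shows "(\<integral>s. (\<integral>t. \<phi> (s,t) \<partial>B) \<partial>A) = (\<integral>t. (\<integral>s. \<phi> (s,t) \<partial>A) \<partial>B)"
proof -
  define P where "P = (\<lambda>\<psi>. \<exists>L. (\<forall>hk\<in>set L. continuous_on K (fst hk) \<and> continuous_on K (snd hk)) \<and> \<psi> = SL L)"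
  define I1 where "I1 = (\<lambda>\<psi>::'a \<times> 'a \<Rightarrow> real. \<integral>s. (\<integral>t. \<psi> (s,t) \<partial>B) \<partial>A)"
  define I2 where "I2 = (\<lambda>\<psi>::'a \<times> 'a \<Rightarrow> real. \<integral>t. (\<integral>s. \<psi> (s,t) \<partial>A) \<partial>B)"
  have swc: "continuous_on (K \<times> K) (\<lambda>p. \<psi> (snd p, fst p))" if "continuous_on (K \<times> K) \<psi>" for \<psi> :: "'a \<times> 'a \<Rightarrow> real"
    by (rule continuous_on_compose2[OF that]) (auto intro!: continuous_intros)
  have I2_eq: "I2 \<psi> = (\<integral>s. (\<integral>t. (\<lambda>p. \<psi> (snd p, fst p)) (s,t) \<partial>A) \<partial>B)" for \<psi>
    by (simp add: I2_def)
  have PI: "I1 \<psi> = I2 \<psi>" if "P \<psi>" for \<psi>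
  proof -
    obtain L where L: "\<forall>hk\<in>set L. continuous_on K (fst hk) \<and> continuous_on K (snd hk)" "\<psi> = SL L"
      using \<open>P \<psi>\<close> P_def by auto
    define L' where "L' = map (\<lambda>hk. (snd hk, fst hk)) L"
    have "\<psi> (s,t) = SL L' (t,s)" for s t
      unfolding L(2) L'_def SL_def by (induction L) auto
    then have "I2 \<psi> = (\<integral>t. (\<integral>s. SL L' (t,s) \<partial>A) \<partial>B)" by (simp add: I2_def)
    also have "\<dots> = sum_list (map (\<lambda>hk. (\<integral>s. fst hk s \<partial>B) * (\<integral>t. snd hk t \<partial>A)) L')"
      by (rule SL_iter[OF K B A]) (use L in \<open>auto simp: L'_def\<close>)
    also have "\<dots> = sum_list (map (\<lambda>hk. (\<integral>s. fst hk s \<partial>A) * (\<integral>t. snd hk t \<partial>B)) L)"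
      unfolding L'_def by (simp add: comp_def mult.commute)
    also have "\<dots> = I1 \<psi>"
      unfolding I1_def L(2) by (rule SL_iter[OF K A B, symmetric]) (use L in auto)
    finally show ?thesis by simp
  qed
  have Pc: "continuous_on (K \<times> K) \<psi>" if "P \<psi>" for \<psi>
    using that SL_cont unfolding P_def by blast
  have approx: "\<exists>\<psi>. P \<psi> \<and> (\<forall>x\<in>K \<times> K. \<bar>\<phi> x - \<psi> x\<bar> < e)" if e: "e > 0" for e
  proof (rule Stone_Weierstrass_HOL[where P=P])
    show "compact (K \<times> K)" by (rule compact_Times[OF K K])
    show "P (\<lambda>x. c)" for c
      unfolding P_def by (rule exI[of _ "[(\<lambda>_. c, \<lambda>_. 1)]"]) (simp add: SL_def[abs_def] continuous_on_const)
    show "continuous_on (K \<times> K) f" if "P f" for f using Pc that .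
    show "P (\<lambda>x. f x + g x)" if fg: "P f \<and> P g" for f g
    proof -
      obtain L1 L2 where "\<forall>hk\<in>set L1. continuous_on K (fst hk) \<and> continuous_on K (snd hk)" "f = SL L1"
        "\<forall>hk\<in>set L2. continuous_on K (fst hk) \<and> continuous_on K (snd hk)" "g = SL L2"
        using fg unfolding P_def by blast
      then show ?thesis unfolding P_def
        by (intro exI[of _ "L1 @ L2"]) (simp add: SL_append fun_eq_iff, blast)
    qed
    show "P (\<lambda>x. f x * g x)" if fg: "P f \<and> P g" for f g
    proof -
      obtain L1 L2 where L12: "\<forall>hk\<in>set L1. continuous_on K (fst hk) \<and> continuous_on K (snd hk)" "f = SL L1"
        "\<forall>hk\<in>set L2. continuous_on K (fst hk) \<and> continuous_on K (snd hk)" "g = SL L2"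
        using fg unfolding P_def by blast
      show ?thesis unfolding P_def
      proof (intro exI[of _ "SLmult L1 L2"] conjI)
        show "\<forall>hk\<in>set (SLmult L1 L2). continuous_on K (fst hk) \<and> continuous_on K (snd hk)"
        proof
          fix hk assume "hk \<in> set (SLmult L1 L2)"
          then obtain a b where ab: "a \<in> set L1" "b \<in> set L2"
            "hk = (\<lambda>x. fst a x * fst b x, \<lambda>y. snd a y * snd b y)"
            by (auto simp: SLmult_def)
          show "continuous_on K (fst hk) \<and> continuous_on K (snd hk)"
            using L12(1,3) ab by (auto intro!: continuous_on_mult)
        qed
        show "(\<lambda>x. f x * g x) = SL (SLmult L1 L2)"
          using L12 by (simp add: SL_mult fun_eq_iff)
      qed
    qed
    show "\<exists>f. P f \<and> f x \<noteq> f y" if xy: "x \<in> K \<times> K \<and> y \<in> K \<times> K \<and> x \<noteq> y" for x y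
    proof (cases "fst x = fst y")
      case False
      have xK: "fst x \<in> K" "fst y \<in> K" using xy by auto
      obtain h :: "'a \<Rightarrow> real" where h: "continuous_on K h" "h (fst x) \<noteq> h (fst y)"
        by (rule sep_points[OF K xK False])
      show ?thesis
      proof (rule exI[of _ "SL [(h, \<lambda>_. 1)]"], rule conjI)
        show "P (SL [(h, \<lambda>_. 1)])" unfolding P_def
          by (rule exI[of _ "[(h, \<lambda>_. 1)]"]) (simp add: h continuous_on_const)
        show "SL [(h, \<lambda>_. 1)] x \<noteq> SL [(h, \<lambda>_. 1)] y" using h by simp
      qed
    next
      case True
      then have ne: "snd x \<noteq> snd y" using xy by (metis prod_eq_iff)
      have xK: "snd x \<in> K" "snd y \<in> K" using xy by auto
      obtain h :: "'a \<Rightarrow> real" where h: "continuous_on K h" "h (snd x) \<noteq> h (snd y)"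
        by (rule sep_points[OF K xK ne])
      show ?thesis
      proof (rule exI[of _ "SL [(\<lambda>_. 1, h)]"], rule conjI)
        show "P (SL [(\<lambda>_. 1, h)])" unfolding P_def
          by (rule exI[of _ "[(\<lambda>_. 1, h)]"]) (simp add: h continuous_on_const)
        show "SL [(\<lambda>_. 1, h)] x \<noteq> SL [(\<lambda>_. 1, h)] y" using h by simp
      qed
    qed
    show "continuous_on (K \<times> K) \<phi>" by (rule phi)
    show "0 < e" by (rule e)
  qed
  have bnd: "\<bar>I1 \<phi> - I2 \<phi>\<bar> \<le> 2 * e" if e: "e > 0" for e
  proof -
    obtain \<psi> where psi: "P \<psi>" "\<forall>x\<in>K \<times> K. \<bar>\<phi> x - \<psi> x\<bar> < e" using approx[OF e] by blast
    have pc: "continuous_on (K \<times> K) \<psi>" using Pc[OF psi(1)] .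
    have dc: "continuous_on (K \<times> K) (\<lambda>p. \<phi> p - \<psi> p)" using phi pc by (intro continuous_intros)
    have "\<bar>I1 \<phi> - I1 \<psi>\<bar> \<le> e"
      unfolding I1_def iter_diff[OF K A B phi pc]
      by (rule iter_bound[OF K A B]) (use dc psi(2) in \<open>auto simp: less_imp_le\<close>)
    moreover have "\<bar>I2 \<phi> - I2 \<psi>\<bar> \<le> e"
      unfolding I2_eq iter_diff[OF K B A swc[OF phi] swc[OF pc]]
      by (rule iter_bound[OF K B A]) (use swc[OF dc] psi(2) in \<open>auto simp: less_imp_le\<close>)
    ultimately show ?thesis using PI[OF psi(1)] by linarith
  qed
  have "I1 \<phi> = I2 \<phi>"
  proof (rule ccontr)
    assume ne: "I1 \<phi> \<noteq> I2 \<phi>"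
    then have pos: "\<bar>I1 \<phi> - I2 \<phi>\<bar> / 4 > 0" by simp
    from bnd[OF pos] ne show False by simp
  qed
  then show ?thesis by (simp add: I1_def I2_def)
qed

lemma Lset_SucI: "z \<in> Lset k K \<Longrightarrow> s \<in> K \<Longrightarrow> z + s \<in> Lset (Suc k) K"
  by auto

lemma cont_shift:
  fixes g :: "'a::{real_vector,t2_space} \<Rightarrow> real"
  assumes lc: "lc_hausdorff_tvs TYPE('a)" and g: "continuous_on D g"
    and sub: "\<And>z. z \<in> E \<Longrightarrow> z + s \<in> D"
  shows "continuous_on E (\<lambda>z. g (z + s))"
  by (rule continuous_on_compose2[OF g lc_add[OF lc]]) (auto intro: continuous_intros sub)

lemma mint_swap:
  fixes Ms :: "'a::{real_vector,t2_space} measure list"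
  assumes lc: "lc_hausdorff_tvs TYPE('a)" and K: "compact K"
    and bp: "\<And>M. M \<in> set (Ps @ A # B # Ms) \<Longrightarrow> borel_prob_on K M"
    and g: "continuous_on (Lset (length (Ps @ A # B # Ms)) K) g"
  shows "mint (Ps @ A # B # Ms) g = mint (Ps @ B # A # Ms) g"
  using bp g
proof (induction Ps arbitrary: g)
  case Nil
  define \<psi> where "\<psi> = (\<lambda>w. mint Ms (\<lambda>z. g (z + w)))"
  have A: "borel_prob_on K A" and B: "borel_prob_on K B" using Nil by auto
  have psic: "continuous_on {t + s |t s. t \<in> K \<and> s \<in> K} \<psi>"
    unfolding \<psi>_def
  proof (rule cont_mint_fixed[OF lc K])
    show "\<And>M. M \<in> set Ms \<Longrightarrow> borel_prob_on K M" using Nil by auto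
    show "continuous_on {z + w |z w. z \<in> Lset (length Ms) K \<and> w \<in> {t + s |t s. t \<in> K \<and> s \<in> K}} g"
      by (rule continuous_on_subset[OF Nil(2)]) (auto simp: add.assoc[symmetric]; blast)
  qed
  have phic: "continuous_on (K \<times> K) (\<lambda>p. \<psi> (snd p + fst p))"
    by (rule continuous_on_compose2[OF psic lc_add[OF lc]], (intro continuous_intros)+, fastforce)
  have "mint ([] @ A # B # Ms) g = (\<integral>s. (\<integral>t. \<psi> (t + s) \<partial>B) \<partial>A)"
    by (simp add: \<psi>_def add.assoc)
  also have "\<dots> = (\<integral>t. (\<integral>s. \<psi> (t + s) \<partial>A) \<partial>B)"
    using swap_int[OF K A B phic] by simp
  also have "\<dots> = mint ([] @ B # A # Ms) g"
    by (simp add: \<psi>_def add_ac)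
  finally show ?case .
next
  case (Cons P Ps)
  have "mint ((P # Ps) @ A # B # Ms) g = (\<integral>s. mint (Ps @ A # B # Ms) (\<lambda>z. g (z + s)) \<partial>P)"
    by simp
  also have "\<dots> = (\<integral>s. mint (Ps @ B # A # Ms) (\<lambda>z. g (z + s)) \<partial>P)"
  proof (rule Bochner_Integration.integral_cong[OF refl])
    fix s assume "s \<in> space P"
    then have s: "s \<in> K" using Cons.prems(1)[of P] by (auto simp: borel_prob_on_def)
    show "mint (Ps @ A # B # Ms) (\<lambda>z. g (z + s)) = mint (Ps @ B # A # Ms) (\<lambda>z. g (z + s))"
    proof (rule Cons.IH)
      show "\<And>M. M \<in> set (Ps @ A # B # Ms) \<Longrightarrow> borel_prob_on K M" using Cons.prems by auto
      have g: "continuous_on (Lset (Suc (length (Ps @ A # B # Ms))) K) g"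
        using Cons.prems(2) by (simp del: Lset.simps)
      show "continuous_on (Lset (length (Ps @ A # B # Ms)) K) (\<lambda>z. g (z + s))"
        by (rule cont_shift[OF lc g Lset_SucI[OF _ s]])
    qed
  qed
  also have "\<dots> = mint ((P # Ps) @ B # A # Ms) g" by simp
  finally show ?case .
qed

lemma mint_move:
  fixes M :: "'a::{real_vector,t2_space} measure"
  assumes lc: "lc_hausdorff_tvs TYPE('a)" and K: "compact K"
    and bp: "\<And>X. X \<in> set (Ps @ Ns1 @ M # Ns2) \<Longrightarrow> borel_prob_on K X"
    and g: "continuous_on (Lset (length (Ps @ Ns1 @ M # Ns2)) K) g"
  shows "mint (Ps @ Ns1 @ M # Ns2) g = mint (Ps @ M # Ns1 @ Ns2) g"
  using bp g
proof (induction Ns1 arbitrary: Ps)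
  case Nil then show ?case by simp
next
  case (Cons N Ns1)
  have "mint (Ps @ (N # Ns1) @ M # Ns2) g = mint ((Ps @ [N]) @ Ns1 @ M # Ns2) g" by simp
  also have "\<dots> = mint ((Ps @ [N]) @ M # Ns1 @ Ns2) g"
    by (rule Cons.IH) (use Cons.prems in auto)
  also have "\<dots> = mint (Ps @ N # M # (Ns1 @ Ns2)) g" by simp
  also have "\<dots> = mint (Ps @ M # N # (Ns1 @ Ns2)) g"
    by (rule mint_swap[OF lc K]) (use Cons.prems in auto)
  finally show ?case by simp
qed

lemma mint_perm:
  fixes Ms :: "'a::{real_vector,t2_space} measure list"
  assumes lc: "lc_hausdorff_tvs TYPE('a)" and K: "compact K"
    and eq: "mset Ms = mset Ns"
    and bp: "\<And>M. M \<in> set Ms \<Longrightarrow> borel_prob_on K M"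
    and g: "continuous_on (Lset (length Ms) K) g"
  shows "mint Ms g = mint Ns g"
  using eq bp g
proof (induction Ms arbitrary: Ns g)
  case Nil then show ?case by simp
next
  case (Cons M Ms)
  have "M \<in> set Ns" using Cons.prems(1) by (metis list.set_intros(1) set_mset_mset)
  then obtain Ns1 Ns2 where Ns: "Ns = Ns1 @ M # Ns2" by (meson split_list)
  have setNs: "set Ns = set (M # Ms)" using Cons.prems(1) by (metis set_mset_mset)
  have lenNs: "length Ns = length (M # Ms)" using Cons.prems(1) by (metis size_mset)
  have "mint Ns g = mint ([] @ M # Ns1 @ Ns2) g"
    unfolding Ns using mint_move[OF lc K, of "[]" Ns1 M Ns2 g] Cons.prems setNs lenNs Ns by auto
  also have "\<dots> = (\<integral>s. mint (Ns1 @ Ns2) (\<lambda>z. g (z + s)) \<partial>M)" by simp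
  also have "\<dots> = (\<integral>s. mint Ms (\<lambda>z. g (z + s)) \<partial>M)"
  proof (rule Bochner_Integration.integral_cong[OF refl])
    fix s assume "s \<in> space M"
    then have s: "s \<in> K" using Cons.prems(2)[of M] by (auto simp: borel_prob_on_def)
    show "mint (Ns1 @ Ns2) (\<lambda>z. g (z + s)) = mint Ms (\<lambda>z. g (z + s))"
    proof (rule Cons.IH[symmetric])
      show "mset Ms = mset (Ns1 @ Ns2)" using Cons.prems(1) Ns by simp
      show "\<And>M. M \<in> set Ms \<Longrightarrow> borel_prob_on K M" using Cons.prems by auto
      have g: "continuous_on (Lset (Suc (length Ms)) K) g"
        using Cons.prems(3) by (simp del: Lset.simps)
      show "continuous_on (Lset (length Ms) K) (\<lambda>z. g (z + s))"
        by (rule cont_shift[OF lc g Lset_SucI[OF _ s]])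
    qed
  qed
  also have "\<dots> = mint (M # Ms) g" by simp
  finally show ?case by simp
qed

lemma convex_on_integral:
  fixes F :: "'a::real_vector \<Rightarrow> 'b \<Rightarrow> real"
  assumes V: "convex V" and conv: "\<And>s. s \<in> space M \<Longrightarrow> convex_on V (\<lambda>v. F v s)"
    and int: "\<And>v. v \<in> V \<Longrightarrow> integrable M (F v)"
  shows "convex_on V (\<lambda>v. \<integral>s. F v s \<partial>M)"
  unfolding convex_on_def
proof (intro conjI V ballI allI impI)
  fix x y and u w :: real
  assume xy: "x \<in> V" "y \<in> V" and uw0: "0 \<le> u" "0 \<le> w" "u + w = 1"
  have uw: "0 \<le> u \<and> 0 \<le> w \<and> u + w = 1" using uw0 by simp
  have xyV: "u *\<^sub>R x + w *\<^sub>R y \<in> V" using V xy uw by (auto intro: convexD)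
  have "(\<integral>s. F (u *\<^sub>R x + w *\<^sub>R y) s \<partial>M) \<le> (\<integral>s. u * F x s + w * F y s \<partial>M)"
  proof (rule integral_mono)
    show "integrable M (F (u *\<^sub>R x + w *\<^sub>R y))" by (rule int[OF xyV])
    show "integrable M (\<lambda>s. u * F x s + w * F y s)" using int[OF xy(1)] int[OF xy(2)] by auto
    fix s assume "s \<in> space M"
    from conv[OF this] show "F (u *\<^sub>R x + w *\<^sub>R y) s \<le> u * F x s + w * F y s"
      using xy uw unfolding convex_on_def by blast
  qed
  also have "\<dots> = u * (\<integral>s. F x s \<partial>M) + w * (\<integral>s. F y s \<partial>M)"
    using int[OF xy(1)] int[OF xy(2)] by simp
  finally show "(\<integral>s. F (u *\<^sub>R x + w *\<^sub>R y) s \<partial>M) \<le> u * (\<integral>s. F x s \<partial>M) + w * (\<integral>s. F y s \<partial>M)" .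
qed

lemma convex_on_affine_comp:
  assumes f: "convex_on K f" and V: "convex V" and im: "\<And>v. v \<in> V \<Longrightarrow> b + c *\<^sub>R v \<in> K"
  shows "convex_on V (\<lambda>v. f (b + c *\<^sub>R v))"
  unfolding convex_on_def
proof (intro conjI V ballI allI impI)
  fix x y and u w :: real
  assume xy: "x \<in> V" "y \<in> V" and uw0: "0 \<le> u" "0 \<le> w" "u + w = 1"
  have uw: "0 \<le> u \<and> 0 \<le> w \<and> u + w = 1" using uw0 by simp
  have "b + c *\<^sub>R (u *\<^sub>R x + w *\<^sub>R y) = u *\<^sub>R (b + c *\<^sub>R x) + w *\<^sub>R (b + c *\<^sub>R y)"
  proof -
    have "b = u *\<^sub>R b + w *\<^sub>R b" using uw by (metis scaleR_add_left scaleR_one)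
    then show ?thesis by (simp add: algebra_simps)
  qed
  then show "f (b + c *\<^sub>R (u *\<^sub>R x + w *\<^sub>R y)) \<le> u * f (b + c *\<^sub>R x) + w * f (b + c *\<^sub>R y)"
    using f im[OF xy(1)] im[OF xy(2)] uw unfolding convex_on_def by auto
qed

lemma mint_convex:
  fixes Ms :: "'a::{real_vector,t2_space} measure list" and g :: "'a \<Rightarrow> real"
  assumes lc: "lc_hausdorff_tvs TYPE('a)" and K: "compact K"
    and bp: "\<And>M. M \<in> set Ms \<Longrightarrow> borel_prob_on K M"
    and V: "convex V"
    and g: "continuous_on D g"
    and sub: "\<And>z v. z \<in> Lset (length Ms) K \<Longrightarrow> v \<in> V \<Longrightarrow> z + A v \<in> D"
    and conv: "\<And>z. z \<in> Lset (length Ms) K \<Longrightarrow> convex_on V (\<lambda>v. g (z + A v))"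
  shows "convex_on V (\<lambda>v. mint Ms (\<lambda>z. g (z + A v)))"
  using bp g sub conv
proof (induction Ms arbitrary: g D)
  case Nil then show ?case by simp
next
  case (Cons M Ms)
  have MK: "space M = K" using Cons.prems(1)[of M] by (auto simp: borel_prob_on_def)
  have eq: "mint (M # Ms) (\<lambda>z. g (z + A v)) = (\<integral>s. mint Ms (\<lambda>z. g (z + s + A v)) \<partial>M)" for v
    by simp
  show ?case
    unfolding eq
  proof (rule convex_on_integral[OF V])
    fix s assume "s \<in> space M"
    then have s: "s \<in> K" using MK by simp
    have "convex_on V (\<lambda>v. mint Ms (\<lambda>z. (\<lambda>u. g (u + s)) (z + A v)))"
    proof (rule Cons.IH)
      show "\<And>M. M \<in> set Ms \<Longrightarrow> borel_prob_on K M" using Cons.prems by auto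
      show "continuous_on {u. u + s \<in> D} (\<lambda>u. g (u + s))"
        by (rule cont_shift[OF lc Cons.prems(2)]) auto
      fix z assume z: "z \<in> Lset (length Ms) K"
      have z': "z + s \<in> Lset (length (M # Ms)) K" using Lset_SucI[OF z s] by simp
      show "z + A v \<in> {u. u + s \<in> D}" if "v \<in> V" for v
        using Cons.prems(3)[OF z' that] by (simp add: add_ac)
      show "convex_on V (\<lambda>v. g (z + A v + s))"
        using Cons.prems(4)[OF z'] by (simp add: add_ac)
    qed
    then show "convex_on V (\<lambda>v. mint Ms (\<lambda>z. g (z + s + A v)))"
      by (simp add: add_ac)
  next
    fix v assume v: "v \<in> V"
    have "continuous_on K (\<lambda>s. mint Ms (\<lambda>z. (\<lambda>u. g (u + A v)) (z + s)))"
    proof (rule cont_mint_fixed[OF lc K])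
      show "\<And>M. M \<in> set Ms \<Longrightarrow> borel_prob_on K M" using Cons.prems by auto
      show "continuous_on {z + w |z w. z \<in> Lset (length Ms) K \<and> w \<in> K} (\<lambda>u. g (u + A v))"
        by (rule cont_shift[OF lc Cons.prems(2)]) (use Cons.prems(3) v in auto)
    qed
    then show "integrable M (\<lambda>s. mint Ms (\<lambda>z. g (z + s + A v)))"
      using bp_integrable[OF K Cons.prems(1)[of M]] by simp
  qed
qed

lemma chord:
  fixes h :: "nat \<Rightarrow> real"
  assumes dc: "\<And>k. 1 \<le> k \<Longrightarrow> k < n \<Longrightarrow> 2 * h k \<le> h (k - 1) + h (k + 1)"
    and kn: "k \<le> n"
  shows "real n * h k \<le> real (n - k) * h 0 + real k * h n"
proof -
  define d where "d = (\<lambda>i. h (Suc i) - h i)"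
  have mono: "d i \<le> d j" if "i \<le> j" "j < n" for i j
    using that
  proof (induction j)
    case 0 then show ?case by simp
  next
    case (Suc j)
    show ?case
    proof (cases "i = Suc j")
      case True then show ?thesis by simp
    next
      case False
      then have "d i \<le> d j" using Suc by auto
      moreover have "2 * h (Suc j) \<le> h (Suc j - 1) + h (Suc j + 1)" using dc[of "Suc j"] Suc.prems by auto
      then have "d j \<le> d (Suc j)" by (simp add: d_def)
      ultimately show ?thesis by simp
    qed
  qed
  show ?thesis
  proof (cases "k = 0 \<or> k = n")
    case True then show ?thesis by (auto simp: of_nat_diff)
  next
    case False
    then have k: "0 < k" "k < n" using kn by auto
    define D where "D = d (k - 1)"
    have A: "h k - h 0 = (\<Sum>i<k. d i)"
      unfolding d_def by (rule sum_lessThan_telescope[symmetric])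
    have B: "h n - h k = (\<Sum>i=k..<n. d i)"
      unfolding d_def using kn by (rule sum_Suc_diff'[symmetric])
    have A': "(\<Sum>i<k. d i) \<le> real k * D"
    proof -
      have "(\<Sum>i<k. d i) \<le> (\<Sum>i<k. D)"
        by (rule sum_mono) (use k in \<open>auto simp: D_def intro!: mono\<close>)
      then show ?thesis by simp
    qed
    have B': "real (n - k) * D \<le> (\<Sum>i=k..<n. d i)"
    proof -
      have "(\<Sum>i=k..<n. D) \<le> (\<Sum>i=k..<n. d i)"
        by (rule sum_mono) (use k in \<open>auto simp: D_def intro!: mono\<close>)
      then show ?thesis by simp
    qed
    have "real (n - k) * (h k - h 0) \<le> real (n - k) * (real k * D)"
      using A A' by (intro mult_left_mono) auto
    also have "\<dots> = real k * (real (n - k) * D)" by simp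
    also have "\<dots> \<le> real k * (h n - h k)"
      using B B' by (intro mult_left_mono) auto
    finally have "real (n - k) * (h k - h 0) \<le> real k * (h n - h k)" .
    then show ?thesis using kn by (simp add: of_nat_diff algebra_simps)
  qed
qed

lemma comb_main:
  fixes H :: "'a::real_vector list \<Rightarrow> real"
  assumes perm: "\<And>ps qs. mset ps = mset qs \<Longrightarrow> set ps \<subseteq> K \<Longrightarrow> length ps = n \<Longrightarrow> H ps = H qs"
    and sep: "\<And>rest. set rest \<subseteq> K \<Longrightarrow> length rest = n - 1 \<Longrightarrow> convex_on K (\<lambda>p. H (p # rest))"
    and delta: "\<And>rest. set rest \<subseteq> K \<Longrightarrow> length rest = n - 2 \<Longrightarrow> 2 \<le> n \<Longrightarrow>
        2 * H (x # y # rest) \<le> H (x # x # rest) + H (y # y # rest)"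
    and x: "x \<in> K" and y: "y \<in> K" and t: "0 \<le> t" "t \<le> 1" and n: "1 \<le> n" and K: "convex K"
  shows "H (replicate n ((1 - t) *\<^sub>R x + t *\<^sub>R y)) \<le> (1 - t) * H (replicate n x) + t * H (replicate n y)"
proof -
  define p where "p = (1 - t) *\<^sub>R x + t *\<^sub>R y"
  have p: "p \<in> K" unfolding p_def using K x y t by (auto intro: convexD)
  define h where "h = (\<lambda>k. H (replicate k y @ replicate (n - k) x))"
  have dc: "2 * h k \<le> h (k - 1) + h (k + 1)" if k: "1 \<le> k" "k < n" for k
  proof -
    define rest where "rest = replicate (k - 1) y @ replicate (n - k - 1) x"
    have rK: "set rest \<subseteq> K" and rl: "length rest = n - 2" using x y k by (auto simp: rest_def)
    have "H (x # y # rest) = h k"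
      unfolding h_def
    proof (rule perm)
      have "n - k = Suc (n - k - 1)" "k = Suc (k - 1)" using k by auto
      then show "mset (x # y # rest) = mset (replicate k y @ replicate (n - k) x)"
        unfolding rest_def by (metis (no_types) add_mset_commute mset.simps(2) mset_append mset_replicate replicate_mset_Suc union_mset_add_mset_left union_mset_add_mset_right)
      show "set (x # y # rest) \<subseteq> K" using rK x y by auto
      show "length (x # y # rest) = n" using rl k by auto
    qed
    moreover have "H (x # x # rest) = h (k - 1)"
      unfolding h_def
    proof (rule perm)
      have "n - (k - 1) = Suc (Suc (n - k - 1))" using k by auto
      then show "mset (x # x # rest) = mset (replicate (k - 1) y @ replicate (n - (k - 1)) x)"
        unfolding rest_def by simp
      show "set (x # x # rest) \<subseteq> K" using rK x y by auto
      show "length (x # x # rest) = n" using rl k by auto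
    qed
    moreover have "H (y # y # rest) = h (k + 1)"
      unfolding h_def
    proof (rule perm)
      have "k + 1 = Suc (Suc (k - 1))" "n - (k + 1) = n - k - 1" using k by auto
      then show "mset (y # y # rest) = mset (replicate (k + 1) y @ replicate (n - (k + 1)) x)"
        unfolding rest_def using k by (cases k) auto
      show "set (y # y # rest) \<subseteq> K" using rK x y by auto
      show "length (y # y # rest) = n" using rl k by auto
    qed
    ultimately show ?thesis using delta[OF rK rl] k by auto
  qed
  define \<Phi> where "\<Phi> = (\<lambda>i j. H (replicate i p @ replicate j y @ replicate (n - i - j) x))"
  have main: "\<forall>j. i + j \<le> n \<longrightarrow> real n * \<Phi> i j \<le> (real n - (real j + t * real i)) * h 0 + (real j + t * real i) * h n" for i
  proof (induction i)
    case 0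
    show ?case
    proof (intro allI impI)
      fix j assume j: "0 + j \<le> n"
      have "real n * h j \<le> real (n - j) * h 0 + real j * h n" using chord[where k=j, OF dc] j by auto
      then show "real n * \<Phi> 0 j \<le> (real n - (real j + t * real 0)) * h 0 + (real j + t * real 0) * h n"
        using j by (simp add: \<Phi>_def h_def of_nat_diff)
    qed
  next
    case (Suc i)
    show ?case
    proof (intro allI impI)
      fix j assume j: "Suc i + j \<le> n"
      define rest where "rest = replicate i p @ replicate j y @ replicate (n - Suc i - j) x"
      have rK: "set rest \<subseteq> K" and rl: "length rest = n - 1" using x y p j by (auto simp: rest_def)
      have e1: "\<Phi> (Suc i) j = H (p # rest)" by (simp add: \<Phi>_def rest_def)
      have e2: "H (x # rest) = \<Phi> i j"
        unfolding \<Phi>_def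
      proof (rule perm)
        have "n - i - j = Suc (n - Suc i - j)" using j by auto
        then show "mset (x # rest) = mset (replicate i p @ replicate j y @ replicate (n - i - j) x)"
          unfolding rest_def by simp
        show "set (x # rest) \<subseteq> K" using rK x by auto
        show "length (x # rest) = n" using rl n by auto
      qed
      have e3: "H (y # rest) = \<Phi> i (Suc j)"
        unfolding \<Phi>_def
      proof (rule perm)
        have "n - i - Suc j = n - Suc i - j" by auto
        then show "mset (y # rest) = mset (replicate i p @ replicate (Suc j) y @ replicate (n - i - Suc j) x)"
          unfolding rest_def by simp
        show "set (y # rest) \<subseteq> K" using rK y by auto
        show "length (y # rest) = n" using rl n by auto
      qed
      have cv: "H (p # rest) \<le> (1 - t) * H (x # rest) + t * H (y # rest)"
        using sep[OF rK rl] x y t unfolding convex_on_def p_def by auto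
      have I1: "real n * \<Phi> i j \<le> (real n - (real j + t * real i)) * h 0 + (real j + t * real i) * h n"
        using Suc.IH j by auto
      have I2: "real n * \<Phi> i (Suc j) \<le> (real n - (real (Suc j) + t * real i)) * h 0 + (real (Suc j) + t * real i) * h n"
        using Suc.IH[rule_format, of "Suc j"] j by simp
      have s1: "real n * \<Phi> (Suc i) j \<le> real n * ((1 - t) * \<Phi> i j + t * \<Phi> i (Suc j))"
        using cv e1 e2 e3 by (intro mult_left_mono) auto
      have s2: "(1 - t) * (real n * \<Phi> i j) \<le> (1 - t) * ((real n - (real j + t * real i)) * h 0 + (real j + t * real i) * h n)"
        using I1 t by (intro mult_left_mono) auto
      have s3: "t * (real n * \<Phi> i (Suc j)) \<le> t * ((real n - (real (Suc j) + t * real i)) * h 0 + (real (Suc j) + t * real i) * h n)"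
        using I2 t by (intro mult_left_mono) auto
      have r1: "real n * ((1 - t) * \<Phi> i j + t * \<Phi> i (Suc j)) = (1 - t) * (real n * \<Phi> i j) + t * (real n * \<Phi> i (Suc j))"
        by (simp add: algebra_simps)
      have r2: "(1 - t) * ((real n - (real j + t * real i)) * h 0 + (real j + t * real i) * h n)
          + t * ((real n - (real (Suc j) + t * real i)) * h 0 + (real (Suc j) + t * real i) * h n)
          = (real n - (real j + t * real (Suc i))) * h 0 + (real j + t * real (Suc i)) * h n"
        by (simp add: algebra_simps)
      show "real n * \<Phi> (Suc i) j \<le> (real n - (real j + t * real (Suc i))) * h 0 + (real j + t * real (Suc i)) * h n"
        using s1 s2 s3 r1 r2 by linarith
    qed
  qed
  have "real n * \<Phi> n 0 \<le> (real n - t * real n) * h 0 + (t * real n) * h n"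
    using main[of n] by auto
  moreover have "\<Phi> n 0 = H (replicate n p)" by (simp add: \<Phi>_def)
  moreover have "h 0 = H (replicate n x)" "h n = H (replicate n y)" by (simp_all add: h_def)
  ultimately have "real n * H (replicate n p) \<le> real n * ((1 - t) * H (replicate n x) + t * H (replicate n y))"
    by (simp add: algebra_simps)
  then show ?thesis using n unfolding p_def by simp
qed

lemma Lset_scale:
  assumes K: "convex K" "K \<noteq> {}" and z: "z \<in> Lset k K"
  shows "\<exists>q\<in>K. z = real k *\<^sub>R q"
  using z
proof (induction k arbitrary: z)
  case 0 then show ?case using K by auto
next
  case (Suc k)
  then obtain z' s where zs: "z = z' + s" "z' \<in> Lset k K" "s \<in> K" by auto
  then obtain q where q: "q \<in> K" "z' = real k *\<^sub>R q" using Suc.IH by blast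
  define r where "r = (real k / (real k + 1)) *\<^sub>R q + (1 / (real k + 1)) *\<^sub>R s"
  have "r \<in> K" unfolding r_def
    by (rule convexD[OF K(1) q(1) zs(3)]) (auto simp: field_simps)
  moreover have "z = real (Suc k) *\<^sub>R r"
    unfolding r_def zs q by (simp add: scaleR_add_right field_simps)
  ultimately show ?case by blast
qed

lemma inK:
  assumes K: "convex K" "K \<noteq> {}" and z: "z \<in> Lset n K" and y: "y \<in> K"
    and a: "a \<ge> 0" and pos: "real n + a > 0"
  shows "(1 / (real n + a)) *\<^sub>R (z + a *\<^sub>R y) \<in> K"
proof -
  obtain q where q: "q \<in> K" "z = real n *\<^sub>R q" using Lset_scale[OF K z] by blast
  have "(1 / (real n + a)) *\<^sub>R (z + a *\<^sub>R y) = (real n / (real n + a)) *\<^sub>R q + (a / (real n + a)) *\<^sub>R y"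
    unfolding q by (simp add: scaleR_add_right)
  also have "\<dots> \<in> K"
  proof (rule convexD[OF K(1) q(1) y])
    show "real n / (real n + a) + a / (real n + a) = 1"
      using pos by (simp add: add_divide_distrib[symmetric])
  qed (use a pos in auto)
  finally show ?thesis .
qed

lemma convex_on_cong_on:
  assumes "convex_on K f" "\<And>x. x \<in> K \<Longrightarrow> f x = g x"
  shows "convex_on K g"
  using assms unfolding convex_on_def by (metis convexD)

lemma half_double: "(1/2::real) *\<^sub>R w + (1/2::real) *\<^sub>R w = (w::'a::real_vector)"
  by (simp add: scaleR_add_left[symmetric])

theorem theorem5p4:
  fixes K :: "'a::{real_vector,t2_space} set"
    and T :: "('a \<Rightarrow> real) \<Rightarrow> ('a \<Rightarrow> real)"
    and mu :: "'a \<Rightarrow> 'a measure"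
    and mus :: "nat \<Rightarrow> 'a measure"
    and a :: real
  assumes lc: "lc_hausdorff_tvs TYPE('a)"
    and K: "convex K" "compact K"
    and T: "markov_op K T"
    and mu: "\<And>x. x \<in> K \<Longrightarrow> borel_prob_on K (mu x)"
    and mu_rep: "\<And>f x. continuous_on K f \<Longrightarrow> x \<in> K \<Longrightarrow> (\<integral>s. f s \<partial>(mu x)) = T f x"
    and T_aff: "\<And>h x. h \<in> A_K K \<Longrightarrow> x \<in> K \<Longrightarrow> T h x = h x"
    and a: "a \<ge> 0"
    and mus: "\<And>n. n \<ge> 1 \<Longrightarrow> borel_prob_on K (mus n)"
    and c1: "\<And>f. continuous_on K f \<Longrightarrow> convex_on K f \<Longrightarrow> convex_on K (T f)"
    and c2: "\<And>f x y. continuous_on K f \<Longrightarrow> convex_on K f \<Longrightarrow> x \<in> K \<Longrightarrow> y \<in> K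
               \<Longrightarrow> Delta mu f x y \<ge> 0"
  shows "\<forall>n\<ge>1. \<forall>f. continuous_on K f \<and> convex_on K f \<longrightarrow>
           convex_on K (C_op mu mus a n f) \<and> continuous_on K (C_op mu mus a n f)"
proof (intro allI impI)
  fix n :: nat and f :: "'a \<Rightarrow> real"
  assume n: "n \<ge> 1" and f: "continuous_on K f \<and> convex_on K f"
  then have fc: "continuous_on K f" and fcv: "convex_on K f" by auto
  show "convex_on K (C_op mu mus a n f) \<and> continuous_on K (C_op mu mus a n f)"
  proof (cases "K = {}")
    case True then show ?thesis by (simp add: convex_on_def)
  next
    case False
    note Kne = False
    define c where "c = 1 / (real n + a)"
    have pos: "real n + a > 0" using n a by auto
    define G where "G = (\<lambda>u. f (c *\<^sub>R u))"
    have Gin: "c *\<^sub>R (z + a *\<^sub>R y0) \<in> K" if "z \<in> Lset n K" "y0 \<in> K" for z y0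
      using inK[OF K(1) Kne that a pos] by (simp add: c_def)
    have Gc: "continuous_on {z + a *\<^sub>R y0 |z y0. z \<in> Lset n K \<and> y0 \<in> K} G"
      unfolding G_def
      by (rule continuous_on_compose2[OF fc lc_scale[OF lc]]) (auto intro: continuous_intros Gin)
    have Copeq: "C_op mu mus a n f x = (\<integral>y0. mint (replicate n (mu x)) (\<lambda>z. G (z + a *\<^sub>R y0)) \<partial>mus n)" for x
      by (simp add: C_op_def iter_int_mint G_def c_def)
    have mus_bp: "borel_prob_on K (mus n)" using mus n .
    have musK: "space (mus n) = K" using mus_bp by (simp add: borel_prob_on_def)
    have Tc: "continuous_on K (T h)" if "continuous_on K h" for h
      using T that by (simp add: markov_op_def)
    have nuc: "continuous_on K (\<lambda>q. \<integral>s. h s \<partial>mu q)" if "continuous_on K h" for h :: "'a \<Rightarrow> real"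
      by (rule continuous_on_eq[OF Tc[OF that]]) (simp add: mu_rep that)
    define \<Phi> where "\<Phi> = (\<lambda>x y0. mint (replicate n (mu x)) (\<lambda>z. G (z + a *\<^sub>R y0)))"
    define W where "W = (\<lambda>y. a *\<^sub>R y) ` K"
    have Phic0: "continuous_on (K \<times> W) (\<lambda>p. mint (map (\<lambda>\<nu>. \<nu> (fst p)) (replicate n mu)) (\<lambda>z. (\<lambda>_. G) (fst p) (z + snd p)))"
    proof (rule cont_mint[OF lc K(2)])
      show "\<And>\<nu> q. \<nu> \<in> set (replicate n mu) \<Longrightarrow> q \<in> K \<Longrightarrow> borel_prob_on K (\<nu> q)" using mu by auto
      show "\<And>\<nu> (h::'a \<Rightarrow> real). \<nu> \<in> set (replicate n mu) \<Longrightarrow> continuous_on K h \<Longrightarrow> continuous_on K (\<lambda>q. \<integral>s. h s \<partial>\<nu> q)"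
        using nuc by auto
      show "continuous_on (K \<times> {z + w |z w. z \<in> Lset (length (replicate n mu)) K \<and> w \<in> W}) (\<lambda>p. G (snd p))"
        by (rule continuous_on_compose2[OF Gc]) (auto intro: continuous_intros simp: W_def)
    qed
    have Phic: "continuous_on (K \<times> K) (\<lambda>p. \<Phi> (fst p) (snd p))"
    proof -
      have "continuous_on (K \<times> K) (\<lambda>p. (\<lambda>p. mint (map (\<lambda>\<nu>. \<nu> (fst p)) (replicate n mu)) (\<lambda>z. (\<lambda>_. G) (fst p) (z + snd p))) (fst p, a *\<^sub>R snd p))"
        by (rule continuous_on_compose2[OF Phic0]) (auto intro!: continuous_intros lc_scale[OF lc] simp: W_def)
      then show ?thesis by (simp add: \<Phi>_def)
    qed
    have Phix: "continuous_on K (\<Phi> x)" if "x \<in> K" for x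
    proof -
      have "continuous_on K (Pair x)" by (intro continuous_intros)
      moreover have "Pair x ` K \<subseteq> K \<times> K" using that by auto
      ultimately show ?thesis using continuous_on_compose2[OF Phic, of K "\<lambda>y. (x, y)"] by auto
    qed
    have cont: "continuous_on K (C_op mu mus a n f)"
    proof -
      have "continuous_on K (\<lambda>x. \<integral>y0. (\<lambda>p. \<Phi> (fst p) (snd p)) (x, y0) \<partial>mus n)"
        by (rule param_int_cont[OF K(2) Phic]) (use mus_bp in auto)
      then show ?thesis by (simp add: Copeq \<Phi>_def)
    qed
    have conv_y: "convex_on K (\<lambda>x. \<Phi> x y0)" if y0: "y0 \<in> K" for y0
    proof -
      define g where "g = (\<lambda>z. G (z + a *\<^sub>R y0))"
      define H where "H = (\<lambda>ps. mint (map mu ps) g)"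
      have gc: "continuous_on (Lset n K) g"
        unfolding g_def
        by (rule continuous_on_compose2[OF Gc lc_add[OF lc]]) (use y0 in \<open>auto intro: continuous_intros\<close>)
      have gaff: "convex_on K (\<lambda>v. g (z' + d *\<^sub>R v))" if zd: "\<And>v. v \<in> K \<Longrightarrow> z' + d *\<^sub>R v \<in> Lset n K" for z' d
      proof -
        have eq: "g (z' + d *\<^sub>R v) = f (c *\<^sub>R (z' + a *\<^sub>R y0) + (c * d) *\<^sub>R v)" for v
          by (simp add: g_def G_def algebra_simps)
        have "convex_on K (\<lambda>v. f (c *\<^sub>R (z' + a *\<^sub>R y0) + (c * d) *\<^sub>R v))"
        proof (rule convex_on_affine_comp[OF fcv K(1)])
          fix v assume v: "v \<in> K"
          have "c *\<^sub>R (z' + d *\<^sub>R v + a *\<^sub>R y0) \<in> K" by (rule Gin[OF zd[OF v] y0])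
          then show "c *\<^sub>R (z' + a *\<^sub>R y0) + (c * d) *\<^sub>R v \<in> K" by (simp add: algebra_simps)
        qed
        then show ?thesis by (simp add: eq)
      qed
      have perm: "H ps = H qs" if "mset ps = mset qs" "set ps \<subseteq> K" "length ps = n" for ps qs
        unfolding H_def
      proof (rule mint_perm[OF lc K(2)])
        show "mset (map mu ps) = mset (map mu qs)" using that(1) by (metis mset_map)
        show "\<And>M. M \<in> set (map mu ps) \<Longrightarrow> borel_prob_on K M" using that(2) mu by auto
        show "continuous_on (Lset (length (map mu ps)) K) g" using gc that(3) by simp
      qed
      have nS: "n = Suc (n - 1)" using n by simp
      have sep: "convex_on K (\<lambda>p. H (p # rest))" if rK: "set rest \<subseteq> K" and rl: "length rest = n - 1" for rest
      proof -
        define \<psi> where "\<psi> = (\<lambda>s. mint (map mu rest) (\<lambda>z. g (z + s)))"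
        have rbp: "\<And>M. M \<in> set (map mu rest) \<Longrightarrow> borel_prob_on K M" using rK mu by auto
        have sub1: "z + s \<in> Lset n K" if "z \<in> Lset (n - 1) K" "s \<in> K" for z s
          using Lset_SucI[OF that] nS by metis
        have psic: "continuous_on K \<psi>"
          unfolding \<psi>_def
        proof (rule cont_mint_fixed[OF lc K(2) rbp])
          show "continuous_on {z + w |z w. z \<in> Lset (length (map mu rest)) K \<and> w \<in> K} g"
            by (rule continuous_on_subset[OF gc]) (use rl sub1 in auto)
        qed
        have psicv: "convex_on K (\<lambda>v. mint (map mu rest) (\<lambda>z. g (z + (\<lambda>v. v) v)))"
        proof (rule mint_convex[OF lc K(2) rbp K(1) gc])
          show "\<And>z v. z \<in> Lset (length (map mu rest)) K \<Longrightarrow> v \<in> K \<Longrightarrow> z + v \<in> Lset n K"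
            using rl sub1 by auto
          fix z assume "z \<in> Lset (length (map mu rest)) K"
          then have "z + 1 *\<^sub>R v \<in> Lset n K" if "v \<in> K" for v using rl sub1 that by auto
          from gaff[OF this] show "convex_on K (\<lambda>v. g (z + v))" by simp
        qed
        have "convex_on K (T \<psi>)"
          by (rule c1[OF psic]) (use psicv in \<open>simp add: \<psi>_def\<close>)
        moreover have "T \<psi> p = H (p # rest)" if "p \<in> K" for p
          using mu_rep[OF psic that] by (simp add: H_def \<psi>_def)
        ultimately show ?thesis by (rule convex_on_cong_on)
      qed
      have delta: "2 * H (x # y # rest) \<le> H (x # x # rest) + H (y # y # rest)"
        if rK: "set rest \<subseteq> K" and rl: "length rest = n - 2" and n2: "2 \<le> n" and x: "x \<in> K" and y: "y \<in> K"
        for rest x y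
      proof -
        define \<psi> where "\<psi> = (\<lambda>w. mint (map mu rest) (\<lambda>z. g (z + w)))"
        define F where "F = (\<lambda>v. \<psi> (v + v))"
        have rbp: "\<And>M. M \<in> set (map mu rest) \<Longrightarrow> borel_prob_on K M" using rK mu by auto
        have nSS: "n = Suc (Suc (n - 2))" using n2 by simp
        have sub2: "z + (v + w) \<in> Lset n K" if "z \<in> Lset (n - 2) K" "v \<in> K" "w \<in> K" for z v w
          using Lset_SucI[OF Lset_SucI[OF that(1,2)] that(3)] nSS by (metis add.assoc)
        have psic: "continuous_on {v + w |v w. v \<in> K \<and> w \<in> K} \<psi>"
          unfolding \<psi>_def
        proof (rule cont_mint_fixed[OF lc K(2) rbp])
          show "continuous_on {z + w |z w. z \<in> Lset (length (map mu rest)) K \<and> w \<in> {v + w |v w. v \<in> K \<and> w \<in> K}} g"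
            by (rule continuous_on_subset[OF gc]) (use rl sub2 in auto)
        qed
        have Fc: "continuous_on K F"
          unfolding F_def
          by (rule continuous_on_compose2[OF psic lc_add[OF lc]]) (auto intro: continuous_intros)
        have Fcv: "convex_on K (\<lambda>v. mint (map mu rest) (\<lambda>z. g (z + (\<lambda>v. v + v) v)))"
        proof (rule mint_convex[OF lc K(2) rbp K(1) gc])
          show "\<And>z v. z \<in> Lset (length (map mu rest)) K \<Longrightarrow> v \<in> K \<Longrightarrow> z + (v + v) \<in> Lset n K"
            using rl sub2 by auto
          fix z assume "z \<in> Lset (length (map mu rest)) K"
          then have "z + 2 *\<^sub>R v \<in> Lset n K" if "v \<in> K" for v using rl sub2 that by (auto simp: scaleR_2)
          from gaff[OF this] show "convex_on K (\<lambda>v. g (z + (v + v)))" by (simp add: scaleR_2)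
        qed
        have Fcv': "convex_on K F" using Fcv by (simp add: F_def \<psi>_def)
        have mid: "mid_int (mu p) (mu q) F = H (q # p # rest)" for p q
          by (simp add: mid_int_def F_def \<psi>_def H_def half_double add.assoc)
        have sw: "H (y # x # rest) = H (x # y # rest)"
          by (rule perm) (use rK rl x y n2 in auto)
        have "0 \<le> Delta mu F x y" by (rule c2[OF Fc Fcv' x y])
        then show ?thesis by (simp add: Delta_def mid sw)
      qed
      show ?thesis
        unfolding convex_on_def
      proof (intro conjI K(1) ballI allI impI)
        fix x1 x2 and u v :: real
        assume xs: "x1 \<in> K" "x2 \<in> K" and uv: "0 \<le> u" "0 \<le> v" "u + v = 1"
        have "H (replicate n ((1 - v) *\<^sub>R x1 + v *\<^sub>R x2)) \<le> (1 - v) * H (replicate n x1) + v * H (replicate n x2)"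
          by (rule comb_main[where K=K, OF perm sep delta xs _ _ n K(1)]) (use uv xs in auto)
        moreover have "H (replicate n x) = \<Phi> x y0" for x by (simp add: H_def g_def \<Phi>_def)
        moreover have "1 - v = u" using uv by simp
        ultimately show "\<Phi> (u *\<^sub>R x1 + v *\<^sub>R x2) y0 \<le> u * \<Phi> x1 y0 + v * \<Phi> x2 y0" by simp
      qed
    qed
    have conv: "convex_on K (C_op mu mus a n f)"
    proof -
      have "convex_on K (\<lambda>x. \<integral>y0. \<Phi> x y0 \<partial>mus n)"
      proof (rule convex_on_integral[OF K(1)])
        show "\<And>s. s \<in> space (mus n) \<Longrightarrow> convex_on K (\<lambda>v. \<Phi> v s)" using conv_y musK by auto
        show "\<And>v. v \<in> K \<Longrightarrow> integrable (mus n) (\<Phi> v)"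
          using bp_integrable[OF K(2) mus_bp Phix] by auto
      qed
      moreover have "C_op mu mus a n f = (\<lambda>x. \<integral>y0. \<Phi> x y0 \<partial>mus n)"
        by (rule ext) (simp add: Copeq \<Phi>_def)
      ultimately show ?thesis by simp
    qed
    show ?thesis using conv cont by auto
  qed
qed

end
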